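(* Let $n\ge 2$, let $F$ be the free group of rank $n$ and $F^{(2)}$ its second derived subgroup. Let $K$ be a field of characteristic $0$ whose transcendence degree over $\mathbb{Q}$ is at least $n$. Then there is a group embedding $F/F^{(2)}\hookrightarrow ST(K)\subset \mathrm{SL}(2,K)$.
   Context: $F^{(2)}$ is the derived subgroup of $F^{(1)}=[F,F]$. $ST(K)$ denotes the group of matrices $\begin{bmatrix} a&0\\ b&a^{-1}\end{bmatrix}$ with $a\in K^*$, $b\in K$. *)

theory Defs
  imports "HOL-Algebra.Algebra" "HOL-Analysis.Analysis"
begin

text \<open>A letter (i, False) stands for the generator x_i, (i, True) for its inverse.\<close>
type_synonym letter = "nat \<times> bool"

definition inv_letter :: "letter \<Rightarrow> letter" where
  "inv_letter l = (fst l, \<not> snd l)"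

fun reduced :: "letter list \<Rightarrow> bool" where
  "reduced (a # b # xs) = (b \<noteq> inv_letter a \<and> reduced (b # xs))"
| "reduced _ = True"

fun red_cons :: "letter \<Rightarrow> letter list \<Rightarrow> letter list" where
  "red_cons a [] = [a]"
| "red_cons a (b # xs) = (if b = inv_letter a then xs else a # b # xs)"

definition word_mult :: "letter list \<Rightarrow> letter list \<Rightarrow> letter list" where
  "word_mult xs ys = foldr red_cons xs ys"

definition free_group :: "nat \<Rightarrow> letter list monoid" where
  "free_group n = \<lparr> carrier = {w. reduced w \<and> (\<forall>l \<in> set w. fst l < n)},
                    monoid.mult = word_mult, monoid.one = [] \<rparr>"

definition alg_indep_rat :: "nat \<Rightarrow> (nat \<Rightarrow> 'k::field_char_0) \<Rightarrow> bool" where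
  "alg_indep_rat n t \<longleftrightarrow>
     (\<forall>(S :: (nat \<Rightarrow> nat) set) (c :: (nat \<Rightarrow> nat) \<Rightarrow> rat).
        finite S \<longrightarrow> (\<forall>e \<in> S. \<forall>i \<ge> n. e i = 0) \<longrightarrow>
        (\<Sum>e\<in>S. of_rat (c e) * (\<Prod>i<n. t i ^ e i)) = 0 \<longrightarrow>
        (\<forall>e \<in> S. c e = 0))"

definition trdeg_ge :: "'k::field_char_0 itself \<Rightarrow> nat \<Rightarrow> bool" where
  "trdeg_ge _ n \<longleftrightarrow> (\<exists>t :: nat \<Rightarrow> 'k. alg_indep_rat n t)"

definition ST :: "('k::field ^ 2 ^ 2) monoid" where
  "ST = \<lparr> carrier = {A. A $ 1 $ 1 \<noteq> 0 \<and> A $ 1 $ 2 = 0 \<and> A $ 2 $ 2 = inverse (A $ 1 $ 1)},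
          monoid.mult = (\<lambda>A B. A ** B), monoid.one = mat 1 \<rparr>"

end

theory Submission
  imports Defs
begin


lemma inv_inv_letter[simp]: "inv_letter (inv_letter a) = a"
  by (cases a) (simp add: inv_letter_def)

lemma inv_letter_neq[simp]: "inv_letter a \<noteq> a"
  by (cases a) (simp add: inv_letter_def)

lemma fst_inv_letter[simp]: "fst (inv_letter a) = fst a"
  by (simp add: inv_letter_def)

lemma reduced_tl: "reduced (a # v) \<Longrightarrow> reduced v"
  by (cases v) auto

lemma reduced_red_cons: "reduced v \<Longrightarrow> reduced (red_cons a v)"
  by (cases v) (auto intro: reduced_tl)

lemma red_cons_set: "set (red_cons a v) \<subseteq> insert a (set v)"
  by (cases v) auto

lemma red_cons_cancel: "reduced v \<Longrightarrow> red_cons a (red_cons (inv_letter a) v) = v"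
proof (cases v)
  case Nil then show ?thesis by simp
next
  case (Cons c v')
  assume r: "reduced v"
  show ?thesis
  proof (cases "c = a")
    case True
    then show ?thesis using r Cons by (cases v') auto
  next
    case False
    then show ?thesis using Cons by auto
  qed
qed

lemma reduced_word_mult: "reduced ys \<Longrightarrow> reduced (word_mult xs ys)"
  by (induction xs) (auto simp: word_mult_def intro: reduced_red_cons)

lemma word_mult_Cons: "word_mult (a # xs) ys = red_cons a (word_mult xs ys)"
  by (simp add: word_mult_def)

lemma word_mult_red_cons:
  assumes "reduced ys" "reduced zs" shows "word_mult (red_cons a ys) zs = red_cons a (word_mult ys zs)"
proof (cases ys)
  case Nil then show ?thesis by (simp add: word_mult_def)
next
  case (Cons b ys')
  show ?thesis
  proof (cases "b = inv_letter a")
    case True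
    have "reduced ys'" using assms Cons reduced_tl by blast
    then have "reduced (word_mult ys' zs)" using assms reduced_word_mult by blast
    have "red_cons a (word_mult ys zs) = red_cons a (red_cons (inv_letter a) (word_mult ys' zs))"
      using Cons True by (simp add: word_mult_def)
    also have "\<dots> = word_mult ys' zs" using red_cons_cancel `reduced (word_mult ys' zs)` by blast
    finally show ?thesis using Cons True by simp
  next
    case False
    then show ?thesis using Cons by (simp add: word_mult_def)
  qed
qed

lemma word_mult_Nil_left[simp]: "word_mult [] ys = ys"
  by (simp add: word_mult_def)

lemma word_mult_assoc:
  "reduced ys \<Longrightarrow> reduced zs \<Longrightarrow> word_mult (word_mult xs ys) zs = word_mult xs (word_mult ys zs)"
  by (induction xs) (auto simp: word_mult_Cons word_mult_red_cons reduced_word_mult word_mult_Nil_left)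

lemma word_mult_Nil_right: "reduced xs \<Longrightarrow> word_mult xs [] = xs"
proof (induction xs)
  case Nil then show ?case by simp
next
  case (Cons a xs)
  then have "word_mult xs [] = xs" using reduced_tl by blast
  then show ?case using Cons.prems by (cases xs) (auto simp: word_mult_Cons)
qed

lemma set_word_mult: "set (word_mult xs ys) \<subseteq> set xs \<union> set ys"
  by (induction xs) (use red_cons_set in \<open>fastforce simp: word_mult_Cons\<close>)+

definition winv :: "letter list \<Rightarrow> letter list" where
  "winv w = rev (map inv_letter w)"

lemma word_mult_append: "word_mult (xs @ ys) zs = word_mult xs (word_mult ys zs)"
  by (simp add: word_mult_def)

lemma winv_mult: "reduced w \<Longrightarrow> word_mult (winv w) w = []"
proof (induction w)
  case Nil then show ?case by (simp add: winv_def)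
next
  case (Cons a w)
  have "word_mult (winv (a # w)) (a # w) = word_mult (winv w) (red_cons (inv_letter a) (a # w))"
    by (simp add: winv_def word_mult_append word_mult_Cons)
  also have "\<dots> = word_mult (winv w) w" by simp
  finally show ?case using Cons reduced_tl by metis
qed

lemma reduced_nth: "reduced w \<longleftrightarrow> (\<forall>i. Suc i < length w \<longrightarrow> w ! Suc i \<noteq> inv_letter (w ! i))"
proof (induction w rule: reduced.induct)
  case (1 a b xs)
  show ?case
  proof
    assume "reduced (a # b # xs)"
    then show "\<forall>i. Suc i < length (a # b # xs) \<longrightarrow> (a # b # xs) ! Suc i \<noteq> inv_letter ((a # b # xs) ! i)"
      using 1 by (auto simp: nth_Cons split: nat.splits)
  next
    assume H: "\<forall>i. Suc i < length (a # b # xs) \<longrightarrow> (a # b # xs) ! Suc i \<noteq> inv_letter ((a # b # xs) ! i)"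
    have "b \<noteq> inv_letter a" using H[rule_format, of 0] by simp
    moreover have "reduced (b # xs)" using 1 H[rule_format, of "Suc _"] by auto
    ultimately show "reduced (a # b # xs)" by simp
  qed
qed (auto simp: less_Suc_eq)

lemma reduced_winv: "reduced w \<Longrightarrow> reduced (winv w)"
  unfolding reduced_nth winv_def
proof (intro allI impI)
  fix i assume H: "\<forall>i. Suc i < length w \<longrightarrow> w ! Suc i \<noteq> inv_letter (w ! i)"
    and i: "Suc i < length (rev (map inv_letter w))"
  define j where "j = length w - Suc (Suc i)"
  have j: "Suc j < length w" "length w - Suc i = Suc j" using i by (auto simp: j_def)
  have "w ! Suc j \<noteq> inv_letter (w ! j)" using H j by blast
  then have "inv_letter (w ! j) \<noteq> inv_letter (inv_letter (w ! Suc j))"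
    by (metis inv_inv_letter)
  then show "rev (map inv_letter w) ! Suc i \<noteq> inv_letter (rev (map inv_letter w) ! i)"
    using i j by (simp add: rev_nth j_def)
qed

lemma group_free: "group (free_group n)"
proof (rule groupI)
  fix x y assume "x \<in> carrier (free_group n)" "y \<in> carrier (free_group n)"
  then show "x \<otimes>\<^bsub>free_group n\<^esub> y \<in> carrier (free_group n)"
    using set_word_mult[of x y] by (auto simp: free_group_def reduced_word_mult)
next
  show "\<one>\<^bsub>free_group n\<^esub> \<in> carrier (free_group n)" by (simp add: free_group_def)
next
  fix x y z assume "x \<in> carrier (free_group n)" "y \<in> carrier (free_group n)" "z \<in> carrier (free_group n)"
  then show "x \<otimes>\<^bsub>free_group n\<^esub> y \<otimes>\<^bsub>free_group n\<^esub> z = x \<otimes>\<^bsub>free_group n\<^esub> (y \<otimes>\<^bsub>free_group n\<^esub> z)"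
    by (auto simp: free_group_def word_mult_assoc)
next
  fix x assume "x \<in> carrier (free_group n)"
  then show "\<one>\<^bsub>free_group n\<^esub> \<otimes>\<^bsub>free_group n\<^esub> x = x" by (simp add: free_group_def)
next
  fix x assume x: "x \<in> carrier (free_group n)"
  show "\<exists>y\<in>carrier (free_group n). y \<otimes>\<^bsub>free_group n\<^esub> x = \<one>\<^bsub>free_group n\<^esub>"
  proof (intro bexI)
    show "winv x \<otimes>\<^bsub>free_group n\<^esub> x = \<one>\<^bsub>free_group n\<^esub>" using x by (simp add: free_group_def winv_mult)
    show "winv x \<in> carrier (free_group n)" using x reduced_winv[unfolded winv_def] by (auto simp: free_group_def winv_def)
  qed
qed



definition mk :: "'k::field \<Rightarrow> 'k \<Rightarrow> 'k ^ 2 ^ 2" where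
  "mk a b = (\<chi> i j. if i = 1 \<and> j = 1 then a else if i = 2 \<and> j = 1 then b
                      else if i = 2 \<and> j = 2 then inverse a else 0)"

lemma mk_nth[simp]: "mk a b $ 1 $ 1 = a" "mk a b $ 2 $ 1 = b" "mk a b $ 1 $ 2 = 0"
  "mk a b $ 2 $ 2 = inverse a"
  by (simp_all add: mk_def)

lemma mk_mult: "mk a b ** mk c d = mk (a * c) (b * c + inverse a * d)"
  unfolding matrix_matrix_mult_def
  by (simp add: vec_eq_iff forall_2 sum_2 mk_def)

lemma mat1_mk: "mat 1 = mk (1::'k::field) 0"
  by (simp add: vec_eq_iff forall_2 mk_def mat_def)

lemma mk_eq_iff: "mk a b = mk c d \<longleftrightarrow> a = c \<and> b = d"
  by (metis mk_nth(1,2))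

lemma ST_carrier: "carrier (ST :: ('k::field ^2^2) monoid) = {mk a b | a b. a \<noteq> 0}"
proof -
  have "A = mk (A $ 1 $ 1) (A $ 2 $ 1)" if "A $ 1 $ 2 = 0" "A $ 2 $ 2 = inverse (A $ 1 $ 1)" for A :: "'k ^2^2"
    using that by (simp add: vec_eq_iff forall_2 mk_def)
  then show ?thesis by (auto simp: ST_def)
qed

lemma mk_in_ST: "a \<noteq> 0 \<Longrightarrow> mk a b \<in> carrier ST"
  by (auto simp: ST_carrier)

lemma group_ST: "group (ST :: ('k::field ^2^2) monoid)"
proof (rule groupI)
  fix x y :: "'k^2^2" assume "x \<in> carrier ST" "y \<in> carrier ST"
  then obtain a b c d where "x = mk a b" "y = mk c d" "a \<noteq> 0" "c \<noteq> 0" by (auto simp: ST_carrier)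
  moreover have "mk a b \<otimes>\<^bsub>ST\<^esub> mk c d = mk (a * c) (b * c + inverse a * d)"
    by (simp add: ST_def mk_mult)
  ultimately show "x \<otimes>\<^bsub>ST\<^esub> y \<in> carrier ST" by (simp add: mk_in_ST)
next
  show "\<one>\<^bsub>ST\<^esub> \<in> carrier (ST :: ('k::field ^2^2) monoid)"
    by (simp add: ST_def mat1_mk[symmetric]) (simp add: mat_def)
next
  fix x y z :: "'k^2^2"
  show "x \<otimes>\<^bsub>ST\<^esub> y \<otimes>\<^bsub>ST\<^esub> z = x \<otimes>\<^bsub>ST\<^esub> (y \<otimes>\<^bsub>ST\<^esub> z)"
    by (simp add: ST_def matrix_mul_assoc)
next
  fix x :: "'k^2^2"
  show "\<one>\<^bsub>ST\<^esub> \<otimes>\<^bsub>ST\<^esub> x = x" by (simp add: ST_def)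
next
  fix x :: "'k^2^2" assume "x \<in> carrier ST"
  then obtain a b where x: "x = mk a b" "a \<noteq> 0" by (auto simp: ST_carrier)
  show "\<exists>y\<in>carrier ST. y \<otimes>\<^bsub>ST\<^esub> x = \<one>\<^bsub>ST\<^esub>"
  proof (intro bexI)
    show "mk (inverse a) (- b) \<otimes>\<^bsub>ST\<^esub> x = \<one>\<^bsub>ST\<^esub>"
      using x by (simp add: ST_def mk_mult mat1_mk)
    show "mk (inverse a) (- b) \<in> carrier ST" using x by (simp add: mk_in_ST)
  qed
qed

lemma ST_mult: "mk a b \<otimes>\<^bsub>ST\<^esub> mk c d = mk (a * c) (b * c + inverse a * d)"
  by (simp add: ST_def mk_mult)

lemma ST_one: "\<one>\<^bsub>ST\<^esub> = mk 1 0"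
  by (simp add: ST_def mat1_mk)

lemma ST_inv: "a \<noteq> 0 \<Longrightarrow> inv\<^bsub>ST\<^esub> (mk a b) = mk (inverse a) (- b)"
  by (rule group.inv_equality[OF group_ST]) (auto simp: ST_mult ST_one mk_in_ST)


definition vadd :: "(nat \<Rightarrow> int) \<Rightarrow> (nat \<Rightarrow> int) \<Rightarrow> nat \<Rightarrow> int" where
  "vadd g h = (\<lambda>j. g j + h j)"

definition delta :: "letter \<Rightarrow> nat \<Rightarrow> int" where
  "delta l = (\<lambda>j. if j = fst l then (if snd l then -1 else 1) else 0)"

fun pe :: "letter list \<Rightarrow> nat \<Rightarrow> int" where
  "pe [] = (\<lambda>_. 0)"
| "pe (l # w) = vadd (delta l) (pe w)"

lemma delta_inv: "delta (inv_letter l) j = - delta l j"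
  by (simp add: delta_def inv_letter_def)

locale stsetup =
  fixes n :: nat and t :: "nat \<Rightarrow> 'k::field_char_0"
  assumes indep: "alg_indep_rat n t"
begin

lemma t_nz: "j < n \<Longrightarrow> t j \<noteq> 0"
proof
  assume j: "j < n" and z: "t j = 0"
  define e where "e = (\<lambda>i::nat. if i = j then 1::nat else 0)"
  have "(\<Prod>i<n. t i ^ e i) = 0"
    using j z by (auto simp: e_def prod_zero_iff intro!: bexI[of _ j])
  then have "(\<Sum>e'\<in>{e}. of_rat ((\<lambda>_. 1) e') * (\<Prod>i<n. t i ^ e' i)) = (0::'k)" by simp
  moreover have "\<forall>e'\<in>{e}. \<forall>i\<ge>n. e' i = 0" using j by (auto simp: e_def)
  ultimately have "\<forall>e'\<in>{e}. (\<lambda>_. 1::rat) e' = 0"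
    using indep[unfolded alg_indep_rat_def, rule_format, of "{e}" "\<lambda>_. 1"] by simp
  then show False by simp
qed

definition Tz :: "(nat \<Rightarrow> int) \<Rightarrow> 'k" where
  "Tz h = (\<Prod>j<n. t j powi h j)"

lemma Tz_add: "Tz (vadd g h) = Tz g * Tz h"
  unfolding Tz_def vadd_def by (simp add: power_int_add t_nz prod.distrib)

lemma Tz_zero: "Tz (\<lambda>_. 0) = 1"
  by (simp add: Tz_def)

lemma Tz_nz: "Tz h \<noteq> 0"
  by (simp add: Tz_def t_nz)

lemma Tz_neg: "Tz (\<lambda>j. - h j) = inverse (Tz h)"
  unfolding Tz_def using prod_inversef[of "\<lambda>j. t j powi h j" "{..<n}"] by (simp add: power_int_minus comp_def)

definition bb :: "letter \<Rightarrow> 'k" where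
  "bb l = (if snd l then - (t (fst l) * t (fst l)) else t (fst l) * t (fst l))"

lemma bb_inv: "bb (inv_letter l) = - bb l"
  by (simp add: bb_def inv_letter_def)

definition gen :: "letter \<Rightarrow> 'k ^2^2" where
  "gen l = mk (Tz (delta l)) (bb l)"

definition phi :: "letter list \<Rightarrow> 'k ^2^2" where
  "phi w = foldr (\<lambda>l M. gen l ** M) w (mat 1)"

fun L :: "(nat \<Rightarrow> int) \<Rightarrow> letter list \<Rightarrow> 'k" where
  "L g [] = 0"
| "L g (l # w) = inverse (Tz g) * bb l * inverse (Tz (vadd g (delta l))) + L (vadd g (delta l)) w"

lemma L_shift: "L g w = inverse (Tz g)^2 * L (\<lambda>_. 0) w"
proof (induction w arbitrary: g)
  case Nil then show ?case by simp
next
  case (Cons l w)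
  have e: "vadd (\<lambda>_. 0) h = h" for h by (simp add: vadd_def)
  have "L g (l # w) = inverse (Tz g) * bb l * inverse (Tz g * Tz (delta l))
          + inverse (Tz g * Tz (delta l))^2 * L (\<lambda>_. 0) w"
    using Cons[of "vadd g (delta l)"] by (simp add: Tz_add)
  also have "\<dots> = inverse (Tz g)^2 * (bb l * inverse (Tz (delta l)) + inverse (Tz (delta l))^2 * L (\<lambda>_. 0) w)"
    using Tz_nz[of g] Tz_nz[of "delta l"] by (simp add: field_simps power2_eq_square)
  also have "\<dots> = inverse (Tz g)^2 * L (\<lambda>_. 0) (l # w)"
    using Cons[of "delta l"] by (simp add: e Tz_zero)
  finally show ?case .
qed

lemma phi_mk: "phi w = mk (Tz (pe w)) (Tz (pe w) * L (\<lambda>_. 0) w)"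
proof (induction w)
  case Nil then show ?case by (simp add: phi_def mat1_mk Tz_zero)
next
  case (Cons l w)
  have e: "vadd (\<lambda>_. 0) h = h" for h by (simp add: vadd_def)
  have "phi (l # w) = gen l ** phi w" by (simp add: phi_def)
  also have "\<dots> = mk (Tz (delta l) * Tz (pe w))
       (bb l * Tz (pe w) + inverse (Tz (delta l)) * (Tz (pe w) * L (\<lambda>_. 0) w))"
    by (simp add: Cons gen_def mk_mult)
  also have "\<dots> = mk (Tz (pe (l # w))) (Tz (pe (l # w)) * L (\<lambda>_. 0) (l # w))"
    using Tz_nz[of "delta l"] Tz_nz[of "pe w"]
    by (simp add: mk_eq_iff Tz_add e Tz_zero L_shift[of "delta l"] field_simps power2_eq_square)
  finally show ?case .
qed

lemma gen_cancel: "gen l ** gen (inv_letter l) = mat 1"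
proof -
  have d: "delta (inv_letter l) = (\<lambda>j. - delta l j)" by (simp add: fun_eq_iff delta_inv)
  show ?thesis
    using Tz_nz[of "delta l"]
    by (simp add: gen_def mk_mult mat1_mk d Tz_neg bb_inv)
qed

lemma phi_red_cons: "phi (red_cons a v) = gen a ** phi v"
proof (cases v)
  case Nil then show ?thesis by (simp add: phi_def)
next
  case (Cons b v')
  show ?thesis
  proof (cases "b = inv_letter a")
    case True
    have "gen a ** phi v = (gen a ** gen b) ** phi v'" using Cons by (simp add: phi_def matrix_mul_assoc)
    then show ?thesis using True Cons by (simp add: gen_cancel)
  next
    case False then show ?thesis using Cons by (simp add: phi_def)
  qed
qed

lemma phi_mult: "phi (word_mult xs ys) = phi xs ** phi ys"
proof (induction xs)
  case Nil then show ?case by (simp add: word_mult_def phi_def)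
next
  case (Cons a xs)
  have "phi (word_mult (a # xs) ys) = gen a ** phi (word_mult xs ys)"
    by (simp add: word_mult_def phi_red_cons)
  also have "\<dots> = (gen a ** phi xs) ** phi ys" by (simp only: Cons matrix_mul_assoc)
  also have "gen a ** phi xs = phi (a # xs)" unfolding phi_def by simp
  finally show ?case .
qed

lemma phi_hom: "phi \<in> hom (free_group n) ST"
proof (rule homI)
  fix x show "phi x \<in> carrier ST" by (simp add: phi_mk Tz_nz mk_in_ST)
next
  fix x y show "phi (x \<otimes>\<^bsub>free_group n\<^esub> y) = phi x \<otimes>\<^bsub>ST\<^esub> phi y"
    by (simp add: free_group_def ST_def phi_mult)
qed

end


lemma sum_list_count:
  fixes f :: "'a \<Rightarrow> 'b::comm_ring_1"
  assumes "set xs \<subseteq> XS" "finite XS"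
  shows "sum_list (map f xs) = (\<Sum>x\<in>XS. of_nat (count_list xs x) * f x)"
  using assms(1)
proof (induction xs)
  case Nil then show ?case by simp
next
  case (Cons a xs)
  have "(\<Sum>x\<in>XS. of_nat (count_list (a # xs) x) * f x)
      = (\<Sum>x\<in>XS. of_nat (count_list xs x) * f x + (if x = a then f x else 0))"
    by (rule sum.cong) (auto simp: algebra_simps)
  also have "\<dots> = (\<Sum>x\<in>XS. of_nat (count_list xs x) * f x) + f a"
    using Cons.prems assms(2) by (simp add: sum.distrib sum.delta')
  finally show ?case using Cons by simp
qed

context stsetup begin

lemma laurent_indep:
  assumes E: "finite E" "\<forall>v\<in>E. \<forall>j\<ge>n. v j = 0"
    and S: "(\<Sum>v\<in>E. of_rat (c v) * Tz v) = 0"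
  shows "\<forall>v\<in>E. c v = 0"
proof -
  define B :: int where "B = (\<Sum>v\<in>E. \<Sum>j<n. \<bar>v j\<bar>)"
  have Bge: "\<bar>v j\<bar> \<le> B" if "v \<in> E" "j < n" for v j
  proof -
    have 1: "\<bar>v j\<bar> \<le> (\<Sum>j<n. \<bar>v j\<bar>)"
      by (rule member_le_sum[where f = "\<lambda>j. \<bar>v j\<bar>"]) (use that in auto)
    have 2: "(\<Sum>j<n. \<bar>v j\<bar>) \<le> B" unfolding B_def
      by (rule member_le_sum[where f = "\<lambda>v. \<Sum>j<n. \<bar>v j\<bar>"]) (use that E in \<open>auto intro: sum_nonneg\<close>)
    from 1 2 show ?thesis by linarith
  qed
  define ex where "ex v = (\<lambda>j. if j < n then nat (v j + B) else 0)" for v :: "nat \<Rightarrow> int"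
  have mono: "Tz v * Tz (\<lambda>_. B) = (\<Prod>j<n. t j ^ ex v j)" if "v \<in> E" for v
  proof -
    have "Tz v * Tz (\<lambda>_. B) = Tz (vadd v (\<lambda>_. B))" by (simp add: Tz_add)
    also have "\<dots> = (\<Prod>j<n. t j ^ ex v j)"
      unfolding Tz_def vadd_def ex_def
    proof (rule prod.cong)
      fix j assume "j \<in> {..<n}"
      then have "v j + B = int (nat (v j + B))" using Bge[OF that, of j] by auto
      then show "t j powi (v j + B) = t j ^ (if j < n then nat (v j + B) else 0)"
        using \<open>j \<in> {..<n}\<close> by (metis lessThan_iff power_int_of_nat)
    qed simp
    finally show ?thesis .
  qed
  have inj: "inj_on ex E"
  proof (rule inj_onI)
    fix v w assume v: "v \<in> E" and w: "w \<in> E" and eq: "ex v = ex w"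
    show "v = w"
    proof
      fix j
      show "v j = w j"
      proof (cases "j < n")
        case True
        have "nat (v j + B) = nat (w j + B)" using fun_cong[OF eq, of j] True by (simp add: ex_def)
        then show ?thesis using Bge[OF v True] Bge[OF w True] by simp
      next
        case False
        then have "j \<ge> n" by simp
        have "v j = 0" using E(2) v \<open>j \<ge> n\<close> by blast
        moreover have "w j = 0" using E(2) w \<open>j \<ge> n\<close> by blast
        ultimately show ?thesis by simp
      qed
    qed
  qed
  define c' where "c' u = c (the_inv_into E ex u)" for u
  have "(\<Sum>u\<in>ex ` E. of_rat (c' u) * (\<Prod>j<n. t j ^ u j)) = (\<Sum>v\<in>E. of_rat (c v) * (\<Prod>j<n. t j ^ ex v j))"
    by (simp add: sum.reindex[OF inj] c'_def the_inv_into_f_f[OF inj])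
  also have "\<dots> = (\<Sum>v\<in>E. of_rat (c v) * Tz v) * Tz (\<lambda>_. B)"
    by (simp add: sum_distrib_right mono mult.assoc)
  also have "\<dots> = 0" using S by simp
  finally have Z: "(\<Sum>u\<in>ex ` E. of_rat (c' u) * (\<Prod>j<n. t j ^ u j)) = 0" .
  have "\<forall>u\<in>ex ` E. \<forall>i\<ge>n. u i = 0" by (auto simp: ex_def)
  moreover have "finite (ex ` E) \<longrightarrow> (\<forall>u\<in>ex ` E. \<forall>i\<ge>n. u i = 0) \<longrightarrow>
      (\<Sum>u\<in>ex ` E. of_rat (c' u) * (\<Prod>j<n. t j ^ u j)) = 0 \<longrightarrow> (\<forall>u\<in>ex ` E. c' u = 0)"
    by (rule spec[of _ c', OF spec[of _ "ex ` E", OF indep[unfolded alg_indep_rat_def]]])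
  ultimately have "\<forall>u\<in>ex ` E. c' u = 0" using Z E(1) by simp
  then show ?thesis by (auto simp: c'_def the_inv_into_f_f[OF inj])
qed

lemma Tz_eq_1:
  assumes "\<forall>j\<ge>n. h j = 0" "Tz h = 1" shows "h = (\<lambda>_. 0)"
proof (rule ccontr)
  assume ne: "h \<noteq> (\<lambda>_. 0)"
  define c :: "(nat \<Rightarrow> int) \<Rightarrow> rat" where "c v = (if v = h then 1 else -1)" for v
  have "(\<Sum>v\<in>{h, \<lambda>_. 0}. of_rat (c v) * Tz v) = 0"
    using ne assms by (simp add: c_def Tz_zero)
  then have "\<forall>v\<in>{h, \<lambda>_. 0}. c v = 0"
    by (intro laurent_indep) (use assms in auto)
  then show False by (simp add: c_def)
qed

lemma Tz_delta: "fst l < n \<Longrightarrow> Tz (delta l) = (if snd l then inverse (t (fst l)) else t (fst l))"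
proof -
  assume l: "fst l < n"
  have "Tz (delta l) = (\<Prod>j<n. if j = fst l then (if snd l then inverse (t (fst l)) else t (fst l)) else 1)"
    unfolding Tz_def by (rule prod.cong) (auto simp: delta_def power_int_minus)
  also have "\<dots> = (if snd l then inverse (t (fst l)) else t (fst l))"
    using l by (simp add: prod.delta)
  finally show ?thesis .
qed

fun edges :: "(nat \<Rightarrow> int) \<Rightarrow> letter list \<Rightarrow> (((nat \<Rightarrow> int) \<times> nat) \<times> bool) list" where
  "edges g [] = []"
| "edges g (l # w) = (if snd l then ((vadd g (delta l), fst l), True) else ((g, fst l), False))
     # edges (vadd g (delta l)) w"

definition emon :: "((nat \<Rightarrow> int) \<times> nat) \<Rightarrow> 'k" where
  "emon e = t (snd e) * inverse (Tz (fst e))^2"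

definition esgn :: "bool \<Rightarrow> 'k" where
  "esgn s = (if s then -1 else 1)"

lemma L_edges:
  "\<forall>l\<in>set w. fst l < n \<Longrightarrow> L g w = sum_list (map (\<lambda>(e, s). esgn s * emon e) (edges g w))"
proof (induction w arbitrary: g)
  case Nil then show ?case by simp
next
  case (Cons l w)
  obtain i s where l: "l = (i, s)" by (cases l)
  have i: "i < n" using Cons.prems l by auto
  have td: "Tz (delta (i, True)) = inverse (t i)" "Tz (delta (i, False)) = t i"
    using Tz_delta[of "(i, True)"] Tz_delta[of "(i, False)"] i by simp_all
  have ti: "t i \<noteq> 0" using t_nz i by blast
  have "inverse (Tz g) * bb l * inverse (Tz (vadd g (delta l))) =
        (if s then esgn True * emon (vadd g (delta l), i) else esgn False * emon (g, i))"
    using Tz_nz[of g] ti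
    unfolding l by (auto simp: Tz_add td bb_def esgn_def emon_def field_simps power2_eq_square)
  then show ?case using Cons by (auto simp: l)
qed

lemma edges_props:
  "\<forall>l\<in>set w. fst l < n \<Longrightarrow> ((h, i), s) \<in> set (edges g w) \<Longrightarrow> i < n \<and> (\<forall>j\<ge>n. h j = g j)"
proof (induction w arbitrary: g)
  case Nil then show ?case by simp
next
  case (Cons l w)
  have d: "\<forall>j\<ge>n. vadd g (delta l) j = g j" using Cons.prems by (auto simp: vadd_def delta_def)
  show ?case
  proof (cases "((h, i), s) \<in> set (edges (vadd g (delta l)) w)")
    case True then show ?thesis using Cons d by auto
  next
    case False
    then show ?thesis using Cons.prems d by (auto split: if_splits)
  qed
qed

end

context stsetup begin

definition emexp :: "((nat \<Rightarrow> int) \<times> nat) \<Rightarrow> nat \<Rightarrow> int" where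
  "emexp e = (\<lambda>j. (if j = snd e then 1 else 0) - 2 * fst e j)"

lemma emon_Tz: "snd e < n \<Longrightarrow> emon e = Tz (emexp e)"
proof -
  assume i: "snd e < n"
  have "emexp e = vadd (delta (snd e, False)) (\<lambda>j. - (vadd (fst e) (fst e) j))"
    by (auto simp: emexp_def vadd_def delta_def fun_eq_iff)
  then have "Tz (emexp e) = t (snd e) * inverse (Tz (fst e) * Tz (fst e))"
    using i by (simp add: Tz_add Tz_neg Tz_delta)
  then show ?thesis by (simp add: emon_def power2_eq_square)
qed

lemma emexp_inj:
  assumes "emexp (h, i) = emexp (h', i')" shows "h = h' \<and> i = i'"
proof -
  have eq: "(if j = i then 1 else 0) - 2 * h j = (if j = i' then 1 else 0) - 2 * h' j" for j
    using fun_cong[OF assms, of j] by (simp add: emexp_def)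
  have ii: "i = i'"
  proof (rule ccontr)
    assume "i \<noteq> i'"
    then have "1 - 2 * h i = - 2 * h' i" using eq[of i] by simp
    then show False by presburger
  qed
  have "h j = h' j" for j using eq[of j] ii by (cases "j = i") auto
  then show ?thesis using ii by auto
qed

lemma balanced:
  assumes w: "\<forall>l\<in>set w. fst l < n" and L0: "L (\<lambda>_. 0) w = 0"
  shows "count_list (edges (\<lambda>_. 0) w) (e, True) = count_list (edges (\<lambda>_. 0) w) (e, False)"
proof -
  define zs where "zs = edges (\<lambda>_. 0) w"
  define E where "E = fst ` set zs"
  have Eprops: "snd e < n \<and> (\<forall>j\<ge>n. fst e j = 0)" if "e \<in> E" for e
    using that edges_props[OF w] unfolding E_def zs_def by fastforce
  have finE: "finite E" by (simp add: E_def)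
  define f where "f = (\<lambda>(e, s). esgn s * emon e)"
  define cnt where "cnt e = int (count_list zs (e, False)) - int (count_list zs (e, True))" for e
  have "0 = sum_list (map f zs)" using L0 L_edges[OF w] by (simp add: zs_def f_def)
  also have "\<dots> = (\<Sum>x\<in>E \<times> UNIV. of_nat (count_list zs x) * f x)"
    by (rule sum_list_count) (force simp: E_def finE)+
  also have "\<dots> = (\<Sum>e\<in>E. \<Sum>s\<in>UNIV. of_nat (count_list zs (e, s)) * f (e, s))"
    using sum.cartesian_product[where g="\<lambda>e s. of_nat (count_list zs (e, s)) * f (e, s)" and A=E and B=UNIV] by simp
  also have "\<dots> = (\<Sum>e\<in>E. of_rat (of_int (cnt e)) * Tz (emexp e))"
    by (rule sum.cong) (auto simp: UNIV_bool f_def esgn_def cnt_def emon_Tz Eprops algebra_simps of_rat_diff of_rat_of_nat_eq)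
  finally have S: "(\<Sum>e\<in>E. of_rat (of_int (cnt e)) * Tz (emexp e)) = 0" by simp
  have inj: "inj_on emexp E"
    by (rule inj_onI) (metis emexp_inj prod.collapse)
  define c' where "c' u = (of_int (cnt (the_inv_into E emexp u)) :: rat)" for u
  have "(\<Sum>u\<in>emexp ` E. of_rat (c' u) * Tz u) = 0"
    using S by (simp add: sum.reindex[OF inj] c'_def the_inv_into_f_f[OF inj])
  moreover have "\<forall>u\<in>emexp ` E. \<forall>j\<ge>n. u j = 0"
    using Eprops by (fastforce simp: emexp_def)
  ultimately have "\<forall>u\<in>emexp ` E. c' u = 0"
    using finE by (intro laurent_indep) auto
  then have Z: "cnt e = 0" if "e \<in> E" for e
    using that by (auto simp: c'_def the_inv_into_f_f[OF inj])
  show ?thesis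
  proof (cases "e \<in> E")
    case True then show ?thesis using Z[OF True] by (simp add: cnt_def zs_def)
  next
    case False
    then have "(e, True) \<notin> set zs" "(e, False) \<notin> set zs" by (force simp: E_def)+
    then show ?thesis by (simp add: zs_def)
  qed
qed

end

definition eprod :: "('a, 'b) monoid_scheme \<Rightarrow> ('e \<Rightarrow> 'a) \<Rightarrow> ('e \<times> bool) list \<Rightarrow> 'a" where
  "eprod G f zs = foldr (\<lambda>(e, s) acc. (if s then inv\<^bsub>G\<^esub> (f e) else f e) \<otimes>\<^bsub>G\<^esub> acc) zs \<one>\<^bsub>G\<^esub>"

lemma eprod_Nil[simp]: "eprod G f [] = \<one>\<^bsub>G\<^esub>"
  by (simp add: eprod_def)

lemma eprod_Cons[simp]: "eprod G f ((e, s) # zs) = (if s then inv\<^bsub>G\<^esub> (f e) else f e) \<otimes>\<^bsub>G\<^esub> eprod G f zs"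
  by (simp add: eprod_def)

lemma (in group) eprod_in:
  assumes "subgroup D G" "\<forall>x\<in>set zs. f (fst x) \<in> D" shows "eprod G f zs \<in> D"
  using assms(2)
proof (induction zs)
  case Nil then show ?case using assms(1) by (simp add: subgroup.one_closed)
next
  case (Cons x zs)
  obtain e s where x: "x = (e, s)" by (cases x)
  have "f e \<in> D" using Cons.prems x by auto
  then show ?case using Cons x assms(1) by (auto intro: subgroup.m_closed subgroup.m_inv_closed)
qed

lemma (in group) eprod_append:
  assumes "\<forall>x\<in>set xs. f (fst x) \<in> carrier G" "eprod G f ys \<in> carrier G"
  shows "eprod G f (xs @ ys) = eprod G f xs \<otimes> eprod G f ys"
  using assms(1)
proof (induction xs)
  case Nil then show ?case using assms(2) by simp
next
  case (Cons x xs)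
  obtain e s where x: "x = (e, s)" by (cases x)
  have fe: "f e \<in> carrier G" using Cons.prems x by auto
  have "eprod G f xs \<in> carrier G"
    using eprod_in[OF subgroup_self, of xs f] Cons.prems by auto
  then show ?case using Cons x fe assms(2) by (auto simp: m_assoc)
qed

lemma (in group) cancel_prod:
  assumes D: "subgroup D G" and fD: "\<forall>x\<in>set zs. f (fst x) \<in> D"
    and bal: "\<forall>e. count_list zs (e, True) = count_list zs (e, False)"
  shows "eprod G f zs \<in> derived G D"
  using fD bal
proof (induction "length zs" arbitrary: zs rule: less_induct)
  case less
  have DD: "subgroup (derived G D) G"
    using derived_is_subgroup subgroup.subset[OF D] by blast
  have Dc: "D \<subseteq> carrier G" using subgroup.subset[OF D] .
  show ?case
  proof (cases zs)
    case Nil then show ?thesis using DD by (simp add: subgroup.one_closed)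
  next
    case (Cons x rest)
    obtain e s where x: "x = (e, s)" by (cases x)
    have "count_list zs (e, \<not> s) > 0"
      using less.prems(2)[rule_format, of e] Cons x by (cases s) auto
    then have "count_list rest (e, \<not> s) > 0" using Cons x by (auto split: if_splits)
    then have "(e, \<not> s) \<in> set rest" using count_notin[of "(e, \<not> s)" rest] by (metis less_irrefl)
    then obtain xs ys where rest: "rest = xs @ (e, \<not> s) # ys" by (meson split_list)
    define u where "u = (if s then inv (f e) else f e)"
    have fe: "f e \<in> D" using less.prems(1) Cons x by auto
    then have uD: "u \<in> D" using D by (auto simp: u_def intro: subgroup.m_inv_closed)
    have uc: "u \<in> carrier G" using uD Dc by auto
    have u': "(if \<not> s then inv (f e) else f e) = inv u"
      using fe Dc by (auto simp: u_def)
    have xsD: "eprod G f xs \<in> D" using less.prems(1) Cons rest by (intro eprod_in[OF D]) auto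
    have ysD: "eprod G f ys \<in> D" using less.prems(1) Cons rest by (intro eprod_in[OF D]) auto
    have xsc: "\<forall>x\<in>set xs. f (fst x) \<in> carrier G" using less.prems(1) Cons rest Dc by auto
    have P: "eprod G f zs = u \<otimes> (eprod G f xs \<otimes> (inv u \<otimes> eprod G f ys))"
      using Cons x rest u' eprod_append[OF xsc, of "(e, \<not> s) # ys"] ysD Dc uc
      by (simp add: u_def[symmetric] subsetD)
    define A where "A = eprod G f xs"
    define B where "B = eprod G f ys"
    have Ac: "A \<in> carrier G" "B \<in> carrier G" using xsD ysD Dc by (auto simp: A_def B_def)
    have comm: "u \<otimes> A \<otimes> inv u \<otimes> inv A \<in> derived G D"
      unfolding derived_def using uD xsD by (intro generate.incl) (auto simp: A_def)
    have "eprod G f zs = (u \<otimes> A \<otimes> inv u \<otimes> inv A) \<otimes> (A \<otimes> B)"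
    proof -
      have "inv A \<otimes> (A \<otimes> B) = B" using Ac by (simp add: m_assoc[symmetric])
      then show ?thesis using P Ac uc by (simp add: A_def[symmetric] B_def[symmetric] m_assoc)
    qed
    moreover have "A \<otimes> B \<in> derived G D"
    proof -
      have "A \<otimes> B = eprod G f (xs @ ys)"
        using eprod_append[OF xsc, of ys] ysD Dc by (auto simp: A_def B_def)
      moreover have "eprod G f (xs @ ys) \<in> derived G D"
      proof (rule less.hyps)
        show "length (xs @ ys) < length zs" using Cons rest by simp
        show "\<forall>x\<in>set (xs @ ys). f (fst x) \<in> D" using less.prems(1) Cons rest by auto
        show "\<forall>e'. count_list (xs @ ys) (e', True) = count_list (xs @ ys) (e', False)"
        proof
          fix e'
          have "count_list zs (e', True) = count_list zs (e', False)" using less.prems(2) by blast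
          then show "count_list (xs @ ys) (e', True) = count_list (xs @ ys) (e', False)"
            using Cons x rest by (cases s) (auto split: if_splits)
        qed
      qed
      ultimately show ?thesis by simp
    qed
    ultimately show ?thesis using comm DD by (simp add: subgroup.m_closed)
  qed
qed

lemma (in comm_group) shift_prod:
  assumes a: "\<forall>j\<in>set J. a j \<in> carrier G" and dist: "distinct J"
  shows "foldr (\<lambda>j acc. a j [^] (h j + (if j = i then 1 else 0) :: int) \<otimes> acc) J \<one>
       = (if i \<in> set J then a i else \<one>) \<otimes> foldr (\<lambda>j acc. a j [^] (h j :: int) \<otimes> acc) J \<one>"
  using a dist
proof (induction J)
  case Nil then show ?case by simp
next
  case (Cons j J)
  have aj: "a j \<in> carrier G" using Cons.prems by auto
  have R: "foldr (\<lambda>j acc. a j [^] (h j :: int) \<otimes> acc) J \<one> \<in> carrier G"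
    using Cons.prems by (induction J) auto
  show ?case
  proof (cases "j = i")
    case True
    then have "i \<notin> set J" using Cons.prems by auto
    then show ?thesis using Cons True aj R by (simp add: int_pow_mult m_assoc m_lcomm)
  next
    case False
    then show ?thesis using Cons aj R by (auto simp: m_lcomm)
  qed
qed


sublocale stsetup \<subseteq> FG: group "free_group n"
  by (rule group_free)

context stsetup begin

definition prodL :: "letter list \<Rightarrow> letter list" where
  "prodL w = foldr (\<lambda>l acc. [l] \<otimes>\<^bsub>free_group n\<^esub> acc) w \<one>\<^bsub>free_group n\<^esub>"

lemma prodL_eq: "reduced w \<Longrightarrow> prodL w = w"
proof -
  have "prodL w = word_mult w []"
    by (induction w) (simp_all add: prodL_def free_group_def word_mult_def)
  then show "reduced w \<Longrightarrow> prodL w = w" by (simp add: word_mult_Nil_right)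
qed

lemma prodL_Cons: "prodL (l # w) = [l] \<otimes>\<^bsub>free_group n\<^esub> prodL w"
  by (simp add: prodL_def)

lemma letter_carrier: "fst l < n \<Longrightarrow> [l] \<in> carrier (free_group n)"
  by (simp add: free_group_def)

lemma prodL_carrier: "\<forall>l\<in>set w. fst l < n \<Longrightarrow> prodL w \<in> carrier (free_group n)"
  by (induction w) (auto simp: prodL_def letter_carrier)

lemma inv_letter_word: "i < n \<Longrightarrow> inv\<^bsub>free_group n\<^esub> [(i, False)] = [(i, True)]"
  by (rule FG.inv_equality) (auto simp: free_group_def word_mult_def inv_letter_def)

definition sig :: "(nat \<Rightarrow> int) \<Rightarrow> letter list" where
  "sig h = foldr (\<lambda>j acc. [(j, False)] [^]\<^bsub>free_group n\<^esub> (h j) \<otimes>\<^bsub>free_group n\<^esub> acc) [0..<n] \<one>\<^bsub>free_group n\<^esub>"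

lemma foldr_sig_carrier: "\<forall>j\<in>set J. j < n \<Longrightarrow> foldr (\<lambda>j acc. [(j, False)] [^]\<^bsub>free_group n\<^esub> ((h :: nat \<Rightarrow> int) j) \<otimes>\<^bsub>free_group n\<^esub> acc) J \<one>\<^bsub>free_group n\<^esub> \<in> carrier (free_group n)"
  by (induction J) (auto simp: letter_carrier intro!: FG.m_closed FG.int_pow_closed)

lemma sig_carrier: "sig h \<in> carrier (free_group n)"
proof -
  have "\<forall>j\<in>set J. j < n \<Longrightarrow> foldr (\<lambda>j acc. [(j, False)] [^]\<^bsub>free_group n\<^esub> (h j) \<otimes>\<^bsub>free_group n\<^esub> acc) J \<one>\<^bsub>free_group n\<^esub> \<in> carrier (free_group n)" for J
    by (induction J) (auto simp: letter_carrier)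
  then show ?thesis by (simp add: sig_def)
qed

lemma sig_zero: "sig (\<lambda>_. 0) = \<one>\<^bsub>free_group n\<^esub>"
proof -
  have "foldr (\<lambda>j acc. [(j, False)] [^]\<^bsub>free_group n\<^esub> ((\<lambda>_. 0::int) j) \<otimes>\<^bsub>free_group n\<^esub> acc) J \<one>\<^bsub>free_group n\<^esub> = \<one>\<^bsub>free_group n\<^esub>" for J
    by (induction J) auto
  then show ?thesis by (simp add: sig_def)
qed

definition yv :: "((nat \<Rightarrow> int) \<times> nat) \<Rightarrow> letter list" where
  "yv e = sig (fst e) \<otimes>\<^bsub>free_group n\<^esub> [(snd e, False)] \<otimes>\<^bsub>free_group n\<^esub>
            inv\<^bsub>free_group n\<^esub> sig (vadd (fst e) (delta (snd e, False)))"

lemma yv_carrier: "snd e < n \<Longrightarrow> yv e \<in> carrier (free_group n)"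
  by (simp add: yv_def sig_carrier letter_carrier)

lemma telescope:
  "\<forall>l\<in>set w. fst l < n \<Longrightarrow>
    sig g \<otimes>\<^bsub>free_group n\<^esub> prodL w \<otimes>\<^bsub>free_group n\<^esub> inv\<^bsub>free_group n\<^esub> sig (vadd g (pe w))
    = eprod (free_group n) yv (edges g w)"
proof (induction w arbitrary: g)
  case Nil
  have "vadd g (\<lambda>_. 0) = g" by (simp add: vadd_def)
  then show ?case by (simp add: prodL_def sig_carrier)
next
  case (Cons l w)
  obtain i s where l: "l = (i, s)" by (cases l)
  have i: "i < n" using Cons.prems l by auto
  define g' where "g' = vadd g (delta l)"
  have wp: "\<forall>l\<in>set w. fst l < n" using Cons.prems by simp
  have gg: "vadd g' (pe w) = vadd g (pe (l # w))" by (simp add: g'_def vadd_def fun_eq_iff)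
  have IH: "sig g' \<otimes>\<^bsub>free_group n\<^esub> prodL w \<otimes>\<^bsub>free_group n\<^esub> inv\<^bsub>free_group n\<^esub> sig (vadd g (pe (l # w)))
      = eprod (free_group n) yv (edges g' w)"
    using Cons.IH[OF wp, of g'] unfolding gg .
  define z where "z = (if s then inv\<^bsub>free_group n\<^esub> (yv (g', i)) else yv (g, i))"
  have z: "z = sig g \<otimes>\<^bsub>free_group n\<^esub> [l] \<otimes>\<^bsub>free_group n\<^esub> inv\<^bsub>free_group n\<^esub> sig g'"
  proof (cases s)
    case True
    have gback: "vadd g' (delta (i, False)) = g"
      using True l by (simp add: g'_def vadd_def delta_def fun_eq_iff)
    have "z = inv\<^bsub>free_group n\<^esub> (sig g' \<otimes>\<^bsub>free_group n\<^esub> [(i, False)] \<otimes>\<^bsub>free_group n\<^esub> inv\<^bsub>free_group n\<^esub> sig g)"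
      using True by (simp add: z_def yv_def gback)
    also have "\<dots> = sig g \<otimes>\<^bsub>free_group n\<^esub> inv\<^bsub>free_group n\<^esub> [(i, False)] \<otimes>\<^bsub>free_group n\<^esub> inv\<^bsub>free_group n\<^esub> sig g'"
      using i by (simp add: sig_carrier letter_carrier FG.inv_mult_group FG.m_assoc)
    finally show ?thesis using True l i by (simp add: inv_letter_word)
  next
    case False
    then show ?thesis using l by (simp add: z_def yv_def g'_def)
  qed
  have "eprod (free_group n) yv (edges g (l # w)) = z \<otimes>\<^bsub>free_group n\<^esub> eprod (free_group n) yv (edges g' w)"
    using l by (cases s) (simp_all add: z_def g'_def)
  also have "\<dots> = sig g \<otimes>\<^bsub>free_group n\<^esub> prodL (l # w) \<otimes>\<^bsub>free_group n\<^esub> inv\<^bsub>free_group n\<^esub> sig (vadd g (pe (l # w)))"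
    using Cons.prems i l
    by (simp add: z IH[symmetric] prodL_Cons sig_carrier letter_carrier prodL_carrier FG.m_assoc
        FG.m_assoc[symmetric, of "inv\<^bsub>free_group n\<^esub> sig g'" "sig g'"])
  finally show ?case ..
qed

end



context stsetup begin

lemma yv_derived:
  assumes i: "snd e < n" shows "yv e \<in> derived (free_group n) (carrier (free_group n))"
proof -
  define D where "D = derived (free_group n) (carrier (free_group n))"
  interpret N: normal D "free_group n" unfolding D_def by (rule FG.derived_self_is_normal)
  interpret Q: comm_group "free_group n Mod D" unfolding D_def by (rule FG.derived_quot_is_comm_group)
  define pi where "pi = (\<lambda>x. D #>\<^bsub>free_group n\<^esub> x)"
  interpret P: group_hom "free_group n" "free_group n Mod D" pi
    unfolding group_hom_def group_hom_axioms_def pi_def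
    using FG.is_group Q.is_group N.r_coset_hom_Mod by blast
  have pisig: "pi (foldr (\<lambda>j acc. [(j, False)] [^]\<^bsub>free_group n\<^esub> (h j) \<otimes>\<^bsub>free_group n\<^esub> acc) J \<one>\<^bsub>free_group n\<^esub>)
     = foldr (\<lambda>j acc. pi [(j, False)] [^]\<^bsub>free_group n Mod D\<^esub> (h j) \<otimes>\<^bsub>free_group n Mod D\<^esub> acc) J \<one>\<^bsub>free_group n Mod D\<^esub>"
    if "\<forall>j\<in>set J. j < n" for J and h :: "nat \<Rightarrow> int"
    using that
  proof (induction J)
    case Nil then show ?case by simp
  next
    case (Cons j J)
    have c: "foldr (\<lambda>j acc. [(j, False)] [^]\<^bsub>free_group n\<^esub> (h j) \<otimes>\<^bsub>free_group n\<^esub> acc) J \<one>\<^bsub>free_group n\<^esub> \<in> carrier (free_group n)"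
      using Cons.prems foldr_sig_carrier[of J h] by simp
    have jn: "j < n" "\<forall>j\<in>set J. j < n" using Cons.prems by auto
    show ?case
      unfolding foldr_Cons comp_apply
      using P.hom_mult[OF FG.int_pow_closed[OF letter_carrier] c, of "(j, False)" "h j"]
        P.hom_int_pow[OF letter_carrier, of "(j, False)" "h j"] Cons.IH[OF jn(2)] jn(1)
      by (simp only: fst_conv)
  qed
  obtain h i where e: "e = (h, i)" by (cases e)
  have i': "i < n" using i e by simp
  define Xq where "Xq = pi [(i, False)]"
  define S where "S = pi (sig h)"
  have Xc: "Xq \<in> carrier (free_group n Mod D)" unfolding Xq_def using i' by (simp add: letter_carrier)
  have Sc: "S \<in> carrier (free_group n Mod D)" unfolding S_def by (simp add: sig_carrier)
  have a: "\<forall>j\<in>set [0..<n]. pi [(j, False)] \<in> carrier (free_group n Mod D)"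
    by (auto simp: letter_carrier)
  have "pi (sig (vadd h (delta (i, False)))) = Xq \<otimes>\<^bsub>free_group n Mod D\<^esub> S"
  proof -
    have "vadd h (delta (i, False)) = (\<lambda>j. h j + (if j = i then 1 else 0))"
      by (simp add: vadd_def delta_def fun_eq_iff)
    then show ?thesis
      unfolding sig_def S_def Xq_def using Q.shift_prod[OF a, of h i] i'
      by (simp add: pisig[of "[0..<n]"] sig_def)
  qed
  then have "pi (yv e) = S \<otimes>\<^bsub>free_group n Mod D\<^esub> Xq \<otimes>\<^bsub>free_group n Mod D\<^esub> inv\<^bsub>free_group n Mod D\<^esub> (Xq \<otimes>\<^bsub>free_group n Mod D\<^esub> S)"
    using i' e by (simp add: yv_def S_def Xq_def sig_carrier letter_carrier)
  also have "\<dots> = \<one>\<^bsub>free_group n Mod D\<^esub>"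
    using Q.r_inv[OF Q.m_closed[OF Sc Xc]] Q.m_comm[OF Xc Sc] by (simp only:)
  finally have "D #>\<^bsub>free_group n\<^esub> yv e = D" by (simp add: pi_def)
  moreover have "yv e \<in> D #>\<^bsub>free_group n\<^esub> yv e"
    using FG.rcos_self[OF yv_carrier[OF i] N.subgroup_axioms] .
  ultimately show ?thesis unfolding D_def by simp
qed

lemma pe_supp: "\<forall>l\<in>set w. fst l < n \<Longrightarrow> j \<ge> n \<Longrightarrow> pe w j = 0"
  by (induction w) (auto simp: vadd_def delta_def)

lemma kernel_sub:
  assumes w: "w \<in> carrier (free_group n)" and ph: "phi w = \<one>\<^bsub>ST\<^esub>"
  shows "w \<in> derived (free_group n) (derived (free_group n) (carrier (free_group n)))"
proof -
  have wl: "\<forall>l\<in>set w. fst l < n" and wr: "reduced w" using w by (auto simp: free_group_def)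
  have "mk (Tz (pe w)) (Tz (pe w) * L (\<lambda>_. 0) w) = mk 1 0" using ph by (simp add: phi_mk ST_one)
  then have T1: "Tz (pe w) = 1" and L0: "L (\<lambda>_. 0) w = 0" by (auto simp: mk_eq_iff)
  have pe0: "pe w = (\<lambda>_. 0)" using Tz_eq_1[OF _ T1] pe_supp[OF wl] by blast
  have "sig (\<lambda>_. 0) \<otimes>\<^bsub>free_group n\<^esub> prodL w \<otimes>\<^bsub>free_group n\<^esub> inv\<^bsub>free_group n\<^esub> sig (vadd (\<lambda>_. 0) (pe w))
      = eprod (free_group n) yv (edges (\<lambda>_. 0) w)" by (rule telescope[OF wl])
  moreover have "vadd (\<lambda>_. 0) (pe w) = (\<lambda>_. 0)" using pe0 by (simp add: vadd_def)
  ultimately have weq: "w = eprod (free_group n) yv (edges (\<lambda>_. 0) w)"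
    using w by (simp add: sig_zero prodL_eq[OF wr])
  have D: "subgroup (derived (free_group n) (carrier (free_group n))) (free_group n)"
    by (rule FG.derived_is_subgroup) simp
  have "eprod (free_group n) yv (edges (\<lambda>_. 0) w) \<in> derived (free_group n) (derived (free_group n) (carrier (free_group n)))"
  proof (rule FG.cancel_prod[OF D])
    show "\<forall>x\<in>set (edges (\<lambda>_. 0) w). yv (fst x) \<in> derived (free_group n) (carrier (free_group n))"
      using edges_props[OF wl] yv_derived by fastforce
    show "\<forall>e. count_list (edges (\<lambda>_. 0) w) (e, True) = count_list (edges (\<lambda>_. 0) w) (e, False)"
      using balanced[OF wl L0] by blast
  qed
  then show ?thesis using weq by simp
qed

lemma phi_form: "x \<in> carrier (free_group n) \<Longrightarrow> \<exists>a b. a \<noteq> 0 \<and> phi x = mk a b"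
  using Tz_nz by (auto simp: phi_mk)

lemma kernel_sup:
  "derived (free_group n) (derived (free_group n) (carrier (free_group n))) \<subseteq> kernel (free_group n) ST phi"
proof -
  interpret PH: group_hom "free_group n" "ST :: ('k^2^2) monoid" phi
    unfolding group_hom_def group_hom_axioms_def using group_free group_ST phi_hom by blast
  define U where "U = {x \<in> carrier (free_group n). phi x $ 1 $ 1 = 1}"
  have Uform: "x \<in> U \<Longrightarrow> \<exists>b. phi x = mk 1 b" for x
    using phi_form[of x] by (auto simp: U_def)
  have subU: "subgroup U (free_group n)"
  proof (rule FG.subgroupI)
    show "U \<subseteq> carrier (free_group n)" by (auto simp: U_def)
    show "U \<noteq> {}" using FG.one_closed by (auto simp: U_def ST_one intro!: exI[of _ "\<one>\<^bsub>free_group n\<^esub>"])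
  next
    fix a assume a: "a \<in> U"
    then obtain b where b: "phi a = mk 1 b" using Uform by blast
    have "phi (inv\<^bsub>free_group n\<^esub> a) = mk 1 (- b)" using a b by (simp add: U_def ST_inv)
    then show "inv\<^bsub>free_group n\<^esub> a \<in> U" using a by (simp add: U_def)
  next
    fix a c assume a: "a \<in> U" and c: "c \<in> U"
    then obtain b d where "phi a = mk 1 b" "phi c = mk 1 d" using Uform by blast
    then have "phi (a \<otimes>\<^bsub>free_group n\<^esub> c) = mk 1 (b + d)" using a c by (simp add: U_def ST_mult)
    then show "a \<otimes>\<^bsub>free_group n\<^esub> c \<in> U" using a c by (simp add: U_def)
  qed
  have D1U: "derived (free_group n) (carrier (free_group n)) \<subseteq> U"
    unfolding derived_def
  proof (rule FG.generate_subgroup_incl[OF _ subU], safe)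
    fix h1 h2 assume h1: "h1 \<in> carrier (free_group n)" and h2: "h2 \<in> carrier (free_group n)"
    obtain a b where ab: "a \<noteq> 0" "phi h1 = mk a b" using phi_form[OF h1] by blast
    obtain c d where cd: "c \<noteq> 0" "phi h2 = mk c d" using phi_form[OF h2] by blast
    have "phi (h1 \<otimes>\<^bsub>free_group n\<^esub> h2 \<otimes>\<^bsub>free_group n\<^esub> inv\<^bsub>free_group n\<^esub> h1 \<otimes>\<^bsub>free_group n\<^esub> inv\<^bsub>free_group n\<^esub> h2) $ 1 $ 1 = 1"
    proof -
      have "a * c * inverse a * inverse c = 1" using ab cd by (simp add: field_simps)
      then show ?thesis using h1 h2 ab cd by (simp add: ST_inv ST_mult)
    qed
    then show "h1 \<otimes>\<^bsub>free_group n\<^esub> h2 \<otimes>\<^bsub>free_group n\<^esub> inv\<^bsub>free_group n\<^esub> h1 \<otimes>\<^bsub>free_group n\<^esub> inv\<^bsub>free_group n\<^esub> h2 \<in> U"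
      using h1 h2 by (simp add: U_def)
  qed
  have "derived_set (free_group n) (derived (free_group n) (carrier (free_group n))) \<subseteq> kernel (free_group n) ST phi"
  proof (safe)
    fix h1 h2 assume h1: "h1 \<in> derived (free_group n) (carrier (free_group n))"
      and h2: "h2 \<in> derived (free_group n) (carrier (free_group n))"
    have h1c: "h1 \<in> carrier (free_group n)" and h2c: "h2 \<in> carrier (free_group n)"
      using h1 h2 D1U by (auto simp: U_def)
    obtain b where b: "phi h1 = mk 1 b" using Uform D1U h1 by blast
    obtain d where d: "phi h2 = mk 1 d" using Uform D1U h2 by blast
    have "phi (h1 \<otimes>\<^bsub>free_group n\<^esub> h2 \<otimes>\<^bsub>free_group n\<^esub> inv\<^bsub>free_group n\<^esub> h1 \<otimes>\<^bsub>free_group n\<^esub> inv\<^bsub>free_group n\<^esub> h2) = \<one>\<^bsub>ST\<^esub>"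
      using h1c h2c b d by (simp add: ST_inv ST_mult ST_one)
    then show "h1 \<otimes>\<^bsub>free_group n\<^esub> h2 \<otimes>\<^bsub>free_group n\<^esub> inv\<^bsub>free_group n\<^esub> h1 \<otimes>\<^bsub>free_group n\<^esub> inv\<^bsub>free_group n\<^esub> h2 \<in> kernel (free_group n) ST phi"
      using h1c h2c by (simp add: kernel_def)
  qed
  then show ?thesis
    unfolding derived_def[of "free_group n" "derived (free_group n) (carrier (free_group n))"]
    by (rule FG.generate_subgroup_incl[OF _ PH.subgroup_kernel])
qed

lemma main_mon:
  "\<exists>h. h \<in> mon (free_group n Mod derived (free_group n) (derived (free_group n) (carrier (free_group n))))
                 (ST :: ('k ^ 2 ^ 2) monoid)"
proof -
  interpret PH: group_hom "free_group n" "ST :: ('k^2^2) monoid" phi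
    unfolding group_hom_def group_hom_axioms_def using group_free group_ST phi_hom by blast
  have K: "kernel (free_group n) ST phi = derived (free_group n) (derived (free_group n) (carrier (free_group n)))"
    using kernel_sup kernel_sub by (auto simp: kernel_def)
  have "(\<lambda>Y. the_elem (phi ` Y)) \<in> mon (free_group n Mod kernel (free_group n) ST phi) ST"
    using PH.FactGroup_hom PH.FactGroup_inj_on by (simp add: mon_def)
  then show ?thesis unfolding K by blast
qed

end

theorem corollary3p4:
  fixes n :: nat
  assumes "n \<ge> 2"
    and "trdeg_ge TYPE('k::field_char_0) n"
  shows "\<exists>h. h \<in> mon (free_group n Mod
                         derived (free_group n) (derived (free_group n) (carrier (free_group n))))
                        (ST :: ('k ^ 2 ^ 2) monoid)"
proof -
  obtain t :: "nat \<Rightarrow> 'k" where "alg_indep_rat n t" using assms(2) by (auto simp: trdeg_ge_def)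
  then interpret stsetup n t by unfold_locales
  show ?thesis by (rule main_mon)
qed


end
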